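(* Let $\mathsf{A}\subset GL_2(\mathbb{R})$. Then $\mathscr{R}(\mathsf{A})=\emptyset$ if and only if $\mathsf{A}$ is strongly conformal.
   Context: $\mathcal{S}(\mathsf{A})$ is the semigroup of finite products of elements of $\mathsf{A}$; $\mathscr{S}(\mathsf{A})=\overline{\mathbb{R}\mathcal{S}(\mathsf{A})}\subset M_2(\mathbb{R})$ (closure of all real multiples of elements of $\mathcal{S}(\mathsf{A})$); $\mathscr{R}(\mathsf{A})=\{A\in\mathscr{S}(\mathsf{A}):\operatorname{rank}(A)=1\}$. A set is strongly conformal if there is a single invertible $M$ with $|\det A|^{-1/2}MAM^{-1}\in O(2)$ for all $A$ in the set. *)

theory Defs
  imports "HOL-Analysis.Analysis"
begin

inductive_set prod_semigroup :: "(real^2^2) set \<Rightarrow> (real^2^2) set" for A where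
  gen: "B \<in> A \<Longrightarrow> B \<in> prod_semigroup A"
| mult: "B \<in> prod_semigroup A \<Longrightarrow> C \<in> prod_semigroup A \<Longrightarrow> B ** C \<in> prod_semigroup A"

definition scrS :: "(real^2^2) set \<Rightarrow> (real^2^2) set" where
  "scrS A = closure {c *\<^sub>R B | c B. B \<in> prod_semigroup A}"

definition scrR :: "(real^2^2) set \<Rightarrow> (real^2^2) set" where
  "scrR A = {B \<in> scrS A. rank B = 1}"

definition strongly_conformal :: "(real^2^2) set \<Rightarrow> bool" where
  "strongly_conformal A \<longleftrightarrow>
     (\<exists>M::real^2^2. invertible M \<and>
        (\<forall>B\<in>A. orthogonal_matrix ((1 / sqrt \<bar>det B\<bar>) *\<^sub>R (M ** B ** matrix_inv M))))"

end

theory Submission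
  imports Defs
begin

lemma ent: "(X::real^2^2) = Y \<longleftrightarrow> X$1$1 = Y$1$1 \<and> X$1$2 = Y$1$2 \<and> X$2$1 = Y$2$1 \<and> X$2$2 = Y$2$2"
  by (auto simp: vec_eq_iff forall_2)
lemma mm: "((X::real^2^2) ** Y) $ i $ j = X$i$1 * Y$1$j + X$i$2*Y$2$j"
  by (simp add: matrix_matrix_mult_def sum_2)
lemma qf: "(x::real^2) \<bullet> ((Q::real^2^2) *v x) = Q$1$1*x$1^2 + (Q$1$2+Q$2$1)*x$1*x$2 + Q$2$2*x$2^2"
  by (simp add: inner_vec_def matrix_vector_mult_def sum_2 power2_eq_square algebra_simps)
lemma n2: "norm (X::real^2^2) ^2 = X$1$1^2+X$1$2^2+X$2$1^2+X$2$2^2"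
  unfolding power2_norm_eq_inner by (simp add: inner_vec_def sum_2 power2_eq_square)
lemma dot2: "(x::real^2) \<bullet> x = x$1^2 + x$2^2"
  by (simp add: inner_vec_def sum_2 power2_eq_square)
lemma mv: "((X::real^2^2) *v x) $ i = X$i$1 * x$1 + X$i$2*x$2"
  by (simp add: matrix_vector_mult_def sum_2)
lemma tr: "transpose (X::real^2^2) $ i $ j = X $ j $ i"
  by (simp add: transpose_def)
lemma det_scale2: "det (c *\<^sub>R (X::real^2^2)) = c^2 * det X"
  by (simp add: det_2 power2_eq_square algebra_simps)
lemma inv_M: "invertible (M::real^2^2) \<Longrightarrow> M ** matrix_inv M = mat 1 \<and> matrix_inv M ** M = mat 1"
  unfolding invertible_def matrix_inv_def by (rule someI_ex)
lemma rank1: "rank (X::real^2^2) = 1 \<longleftrightarrow> X \<noteq> 0 \<and> det X = 0"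
proof -
  have "rank X \<le> 2" using rank_bound[of X] by simp
  then show ?thesis using det_eq_0_rank[of X] rank_eq_0[of X] by auto
qed
lemma sg_det: assumes "\<forall>B\<in>A. invertible B" "B \<in> prod_semigroup A" shows "det B \<noteq> 0"
  using assms(2) by induction (use assms(1) in \<open>auto simp: invertible_det_nz det_mul\<close>)

definition conf :: "real^2^2 \<Rightarrow> bool" where "conf Y \<longleftrightarrow> (\<exists>l. transpose Y ** Y = l *\<^sub>R mat 1)"

lemma conf_ent: "conf Y \<longleftrightarrow> Y$1$1*Y$1$2 + Y$2$1*Y$2$2 = 0 \<and> Y$1$1^2+Y$2$1^2 = Y$1$2^2+Y$2$2^2"
proof
  assume "conf Y" then obtain l where "transpose Y ** Y = l *\<^sub>R mat 1" unfolding conf_def by auto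
  then show "Y$1$1*Y$1$2 + Y$2$1*Y$2$2 = 0 \<and> Y$1$1^2+Y$2$1^2 = Y$1$2^2+Y$2$2^2"
    unfolding ent mm tr by (simp add: mat_def power2_eq_square)
next
  assume h: "Y$1$1*Y$1$2 + Y$2$1*Y$2$2 = 0 \<and> Y$1$1^2+Y$2$1^2 = Y$1$2^2+Y$2$2^2"
  have "transpose Y ** Y = (Y$1$1^2+Y$2$1^2) *\<^sub>R mat 1"
    using h unfolding ent mm tr by (simp add: mat_def power2_eq_square algebra_simps)
  then show "conf Y" unfolding conf_def by blast
qed

lemma conf_mult: assumes "conf Y" "conf Z" shows "conf (Y ** Z)"
proof -
  obtain l where l: "transpose Y ** Y = l *\<^sub>R mat 1" using assms unfolding conf_def by auto
  obtain m where m: "transpose Z ** Z = m *\<^sub>R mat 1" using assms unfolding conf_def by auto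
  have "transpose (Y**Z) ** (Y**Z) = transpose Z ** ((transpose Y ** Y) ** Z)"
    by (simp add: matrix_transpose_mul matrix_mul_assoc)
  also have "\<dots> = l *\<^sub>R (transpose Z ** Z)" unfolding l ent mm
    by (simp add: mat_def mm algebra_simps)
  also have "\<dots> = (l*m) *\<^sub>R mat 1" unfolding m by simp
  finally show ?thesis unfolding conf_def by blast
qed

lemma conf_scale: assumes "conf Y" shows "conf (c *\<^sub>R Y)"
proof -
  obtain l where l: "transpose Y ** Y = l *\<^sub>R mat 1" using assms unfolding conf_def by auto
  have "transpose (c *\<^sub>R Y) ** (c *\<^sub>R Y) = (c*c) *\<^sub>R (transpose Y ** Y)"
    by (simp add: matrix_scalar_ac scalar_matrix_assoc transpose_scalar)
  then show ?thesis unfolding conf_def l by auto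
qed

lemma conf_zero: assumes "conf Y" "det Y = 0" shows "Y = 0"
proof -
  let ?a = "Y$1$1" and ?b = "Y$1$2" and ?c = "Y$2$1" and ?d = "Y$2$2"
  have h: "?a*?b + ?c*?d = 0" "?a^2+?c^2 = ?b^2+?d^2" using assms(1) unfolding conf_ent by auto
  have d: "?a*?d - ?b*?c = 0" using assms(2) unfolding det_2 by simp
  have "(?a*?d - ?b*?c)^2 = (?a^2+?c^2)*(?b^2+?d^2) - (?a*?b+?c*?d)^2" by algebra
  then have e: "0 = (?a^2+?c^2)*(?b^2+?d^2)" using h d by simp
  then have "(?a^2+?c^2)*(?a^2+?c^2) = 0" using h(2) by simp
  then have "?a^2+?c^2 = 0" by simp
  then have ac: "?a = 0" "?c = 0" by (simp_all add: sum_power2_eq_zero_iff)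
  then have "?b^2 + ?d^2 = 0" using h(2) by simp
  then have "?b = 0" "?d = 0" by (simp_all add: sum_power2_eq_zero_iff)
  moreover note ac
  ultimately show ?thesis unfolding ent by simp
qed

lemma closed_conf: "closed {X::real^2^2. conf (M ** X ** N)}"
  unfolding conf_ent mm by (intro closed_Collect_conj closed_Collect_eq continuous_intros)

lemma orth_conf: "orthogonal_matrix U \<Longrightarrow> conf U"
  unfolding orthogonal_matrix_def conf_def by (metis scale_one)

lemma dir1:
  assumes inv: "\<forall>B\<in>A. invertible B" and sc: "strongly_conformal A"
  shows "scrR A = {}"
proof -
  obtain M :: "real^2^2" where M: "invertible M"
    and Ort: "\<forall>B\<in>A. orthogonal_matrix ((1 / sqrt \<bar>det B\<bar>) *\<^sub>R (M ** B ** matrix_inv M))"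
    using sc unfolding strongly_conformal_def by blast
  define N where "N = matrix_inv M"
  have MN: "M ** N = mat 1" "N ** M = mat 1" using inv_M[OF M] unfolding N_def by auto
  have sg: "conf (M ** B ** N)" if "B \<in> prod_semigroup A" for B
    using that
  proof induction
    case (gen B)
    then have "conf ((1 / sqrt \<bar>det B\<bar>) *\<^sub>R (M ** B ** N))" using Ort orth_conf N_def by auto
    then have "conf (sqrt \<bar>det B\<bar> *\<^sub>R ((1 / sqrt \<bar>det B\<bar>) *\<^sub>R (M ** B ** N)))" by (rule conf_scale)
    moreover have "det B \<noteq> 0" using gen inv invertible_det_nz by auto
    ultimately show ?case by simp
  next
    case (mult B C)
    have "(M ** B ** N) ** (M ** C ** N) = M ** B ** (N ** M) ** C ** N"
      by (simp add: matrix_mul_assoc)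
    then have "M ** (B ** C) ** N = (M ** B ** N) ** (M ** C ** N)"
      by (simp add: matrix_mul_assoc MN)
    then show ?case using mult conf_mult by simp
  qed
  have T: "{c *\<^sub>R B | c B. B \<in> prod_semigroup A} \<subseteq> {X. conf (M ** X ** N)}"
  proof safe
    fix c B assume "B \<in> prod_semigroup A"
    then have "conf (c *\<^sub>R (M ** B ** N))" using sg conf_scale by blast
    moreover have "M ** (c *\<^sub>R B) ** N = c *\<^sub>R (M ** B ** N)"
      by (simp add: matrix_scalar_ac scalar_matrix_assoc)
    ultimately show "conf (M ** (c *\<^sub>R B) ** N)" by simp
  qed
  have S: "scrS A \<subseteq> {X. conf (M ** X ** N)}"
    unfolding scrS_def by (rule closure_minimal[OF T closed_conf])
  show ?thesis
  proof (rule ccontr)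
    assume "scrR A \<noteq> {}"
    then obtain X where X: "X \<in> scrS A" "rank X = 1" unfolding scrR_def by auto
    then have "X \<noteq> 0" "det X = 0" using rank1 by auto
    have "conf (M ** X ** N)" using S X by auto
    moreover have "det (M ** X ** N) = 0" using \<open>det X = 0\<close> by (simp add: det_mul)
    ultimately have "M ** X ** N = 0" by (rule conf_zero)
    then have "N ** (M ** X ** N) ** M = 0" by simp
    moreover have "N ** (M ** X ** N) ** M = (N ** M) ** X ** (N ** M)"
      by (simp add: matrix_mul_assoc)
    ultimately have "X = 0" by (simp add: MN)
    then show False using \<open>X \<noteq> 0\<close> by simp
  qed
qed

lemma qf_lin: "(x::real^2) \<bullet> ((a *\<^sub>R P + b *\<^sub>R (Q::real^2^2)) *v x) = a * (x \<bullet> (P *v x)) + b * (x \<bullet> (Q *v x))"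
  unfolding qf by (simp add: algebra_simps)

lemma qf_conj: "(x::real^2) \<bullet> ((transpose g ** Q ** g) *v x) = (g *v x) \<bullet> ((Q::real^2^2) *v (g *v x))"
  unfolding qf mm tr mv by (simp add: power2_eq_square algebra_simps)

lemma cs: "((s::real^2^2) *v x) \<bullet> (s *v x) \<le> norm s ^ 2 * (x \<bullet> x)"
proof -
  have r1: "(s$1$1 * x$1 + s$1$2 * x$2)^2 \<le> (s$1$1^2 + s$1$2^2) * (x$1^2 + x$2^2)"
  proof -
    have "(s$1$1^2 + s$1$2^2) * (x$1^2 + x$2^2) - (s$1$1 * x$1 + s$1$2 * x$2)^2 = (s$1$1 * x$2 - s$1$2 * x$1)^2"
      by (simp add: power2_eq_square algebra_simps)
    then show ?thesis using zero_le_power2[of "s$1$1 * x$2 - s$1$2 * x$1"] by linarith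
  qed
  have r2: "(s$2$1 * x$1 + s$2$2 * x$2)^2 \<le> (s$2$1^2 + s$2$2^2) * (x$1^2 + x$2^2)"
  proof -
    have "(s$2$1^2 + s$2$2^2) * (x$1^2 + x$2^2) - (s$2$1 * x$1 + s$2$2 * x$2)^2 = (s$2$1 * x$2 - s$2$2 * x$1)^2"
      by (simp add: power2_eq_square algebra_simps)
    then show ?thesis using zero_le_power2[of "s$2$1 * x$2 - s$2$2 * x$1"] by linarith
  qed
  show ?thesis unfolding dot2 mv n2 using r1 r2 by (simp add: algebra_simps)
qed

lemma det_uniq:
  fixes a b c d e f m :: real
  assumes "a > 0" "d > 0" "m > 0" "a*c - b^2 = m" "d*f - e^2 = m"
    "((a+d)*(c+f) - (b+e)^2)/4 \<le> m"
  shows "a = d \<and> b = e \<and> c = f"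
proof -
  have id: "a*d*(a*f+c*d-2*b*e-2*m) = a^2*(d*f) + d^2*(a*c) - 2*a*b*d*e - 2*a*d*m"
    by (simp add: power2_eq_square algebra_simps)
  also have "\<dots> = m*(a-d)^2 + (a*e-d*b)^2"
    using assms(4,5) by (simp add: power2_eq_square algebra_simps)
  finally have id2: "a*d*(a*f+c*d-2*b*e-2*m) = m*(a-d)^2 + (a*e-d*b)^2" .
  have "(a+d)*(c+f) - (b+e)^2 = (a*c-b^2) + (d*f-e^2) + (a*f+c*d-2*b*e)"
    by (simp add: power2_eq_square algebra_simps)
  then have "a*f+c*d-2*b*e-2*m \<le> 0" using assms(4,5,6) by simp
  moreover have "a*d > 0" using assms by simp
  ultimately have "a*d*(a*f+c*d-2*b*e-2*m) \<le> 0" by (simp add: mult_nonneg_nonpos)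
  then have "m*(a-d)^2 + (a*e-d*b)^2 \<le> 0" using id2 by simp
  moreover have "m*(a-d)^2 \<ge> 0" using assms(3) by simp
  ultimately have z1: "m*(a-d)^2 = 0" and z2: "(a*e-d*b)^2 = 0"
    by (smt (verit) zero_le_power2)+
  from z1 assms(3) have ad: "a = d" by simp
  from z2 have "a*e = d*b" by simp
  with ad assms(1) have be: "b = e" by simp
  have "d*c - e^2 = m" using assms(4) ad be by simp
  then have "d*c = d*f" using assms(5) by linarith
  then have "c = f" using assms(2) by simp
  with ad be show ?thesis by simp
qed

lemma dir2_bound:
  assumes inv: "\<forall>B\<in>A. invertible B" and R: "scrR A = {}"
  shows "\<exists>\<delta>>0. \<forall>B\<in>prod_semigroup A. \<delta> * norm B ^2 \<le> \<bar>det B\<bar>"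
proof -
  let ?sg = "prod_semigroup A"
  have dnz: "det B \<noteq> 0" if "B \<in> ?sg" for B using sg_det[OF inv that] .
  define S where "S = scrS A \<inter> sphere 0 1"
  have cS: "compact S" unfolding S_def scrS_def
    by (subst Int_commute) (rule compact_Int_closed[OF compact_sphere closed_closure])
  have Snz: "det Y \<noteq> 0" if "Y \<in> S" for Y
  proof
    assume "det Y = 0"
    moreover have "Y \<noteq> 0" using that unfolding S_def by auto
    ultimately have "rank Y = 1" using rank1 by auto
    then have "Y \<in> scrR A" using that unfolding S_def scrR_def by auto
    then show False using R by auto
  qed
  have inS: "(1 / norm B) *\<^sub>R B \<in> S" if "B \<in> ?sg" for B
  proof -
    have "B \<noteq> 0" using dnz[OF that] by (auto simp: det_2)
    have "(1 / norm B) *\<^sub>R B \<in> scrS A" unfolding scrS_def using that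
      by (intro closure_subset[THEN subsetD]) blast
    moreover have "norm ((1 / norm B) *\<^sub>R B) = 1" using \<open>B \<noteq> 0\<close> by simp
    ultimately show ?thesis unfolding S_def by simp
  qed
  show ?thesis
  proof (cases "S = {}")
    case True then show ?thesis using inS by (intro exI[of _ 1]) auto
  next
    case False
    have "continuous_on S (\<lambda>Y. \<bar>det Y\<bar>)" unfolding det_2 by (intro continuous_intros)
    then obtain Y0 where Y0: "Y0 \<in> S" "\<forall>Y\<in>S. \<bar>det Y0\<bar> \<le> \<bar>det Y\<bar>"
      using continuous_attains_inf[OF cS False] by blast
    have pos: "\<bar>det Y0\<bar> > 0" using Snz[OF Y0(1)] by simp
    have "\<bar>det Y0\<bar> * norm B ^2 \<le> \<bar>det B\<bar>" if "B \<in> ?sg" for B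
    proof -
      have "B \<noteq> 0" using dnz[OF that] by (auto simp: det_2)
      have "\<bar>det Y0\<bar> \<le> \<bar>det ((1 / norm B) *\<^sub>R B)\<bar>" using Y0(2) inS[OF that] by blast
      also have "\<dots> = \<bar>det B\<bar> / norm B ^2" by (simp add: det_scale2 power_divide abs_mult)
      finally show ?thesis using \<open>B \<noteq> 0\<close> by (simp add: field_simps)
    qed
    then show ?thesis using pos by blast
  qed
qed

lemma dir2:
  assumes inv: "\<forall>B\<in>A. invertible B" and R0: "scrR A = {}"
  shows "strongly_conformal A"
proof -
  let ?sg = "prod_semigroup A"
  have dnz: "det B \<noteq> 0" if "B \<in> ?sg" for B using sg_det[OF inv that] .
  obtain \<delta> where \<delta>: "\<delta> > 0" "\<forall>B\<in>?sg. \<delta> * norm B ^2 \<le> \<bar>det B\<bar>"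
    using dir2_bound[OF inv R0] by blast
  define nrm where "nrm B = (1 / sqrt \<bar>det B\<bar>) *\<^sub>R B" for B :: "real^2^2"
  have nrm_det: "(det (nrm B))^2 = 1" if "B \<in> ?sg" for B
  proof -
    have d: "det B \<noteq> 0" using dnz[OF that] .
    have "det (nrm B) = det B / \<bar>det B\<bar>" unfolding nrm_def det_scale2 by (simp add: power_divide)
    then show ?thesis using d by (simp add: power_divide)
  qed
  have nrm_mult: "nrm B ** nrm C = nrm (B ** C)" for B C
    unfolding nrm_def by (simp add: det_mul abs_mult real_sqrt_mult matrix_scalar_ac scalar_matrix_assoc mult.commute)
  define R where "R = max 2 (1/\<delta>)"
  have Rpos: "R > 0" unfolding R_def by simp
  define K where "K = insert (mat 1) (nrm ` ?sg)"
  have Kb: "norm s ^ 2 \<le> R" if "s \<in> K" for s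
  proof -
    { assume "s = mat 1" then have "norm s ^2 = 2" by (simp add: n2 mat_def) }
    moreover
    { fix B assume B: "B \<in> ?sg" "s = nrm B"
      have d: "\<bar>det B\<bar> > 0" using dnz[OF B(1)] by simp
      have "norm s ^2 = norm B^2 / \<bar>det B\<bar>" unfolding B(2) nrm_def
        using d by (simp add: power_mult_distrib power_divide)
      also have "\<dots> \<le> 1/\<delta>" using \<delta> B d by (simp add: field_simps)
      finally have "norm s ^2 \<le> 1/\<delta>" . }
    ultimately show ?thesis using that unfolding K_def R_def by force
  qed
  have K_mult: "nrm B ** s \<in> K" if sK: "s \<in> K" and BA: "B \<in> A" for s B
  proof -
    have Bs: "B \<in> ?sg" using BA by (rule prod_semigroup.gen)
    show ?thesis
    proof (cases "s = mat 1")
      case True then show ?thesis using Bs unfolding K_def by simp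
    next
      case False
      then obtain C where C: "C \<in> ?sg" "s = nrm C" using sK unfolding K_def by auto
      have "B ** C \<in> ?sg" using Bs C(1) by (rule prod_semigroup.mult)
      then show ?thesis using C nrm_mult unfolding K_def by auto
    qed
  qed
  define F where "F = {Q::real^2^2. transpose Q = Q \<and> (\<forall>x. 0 \<le> x \<bullet> (Q *v x)) \<and>
     (\<forall>s\<in>K. \<forall>x. (s *v x) \<bullet> (Q *v (s *v x)) \<le> x \<bullet> x)}"
  have closedF: "closed F"
  proof -
    have "F = {Q. Q$1$2 = Q$2$1} \<inter> (\<Inter>x. {Q. 0 \<le> x \<bullet> (Q *v x)}) \<inter>
       (\<Inter>s\<in>K. \<Inter>x. {Q. (s *v x) \<bullet> (Q *v (s *v x)) \<le> x \<bullet> x})"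
      unfolding F_def ent tr by auto
    moreover have "closed {Q::real^2^2. Q$1$2 = Q$2$1}" by (intro closed_Collect_eq continuous_intros)
    moreover have "closed {Q::real^2^2. a \<le> y \<bullet> (Q *v y)}" for a y
      unfolding qf by (intro closed_Collect_le continuous_intros)
    moreover have "closed {Q::real^2^2. y \<bullet> (Q *v y) \<le> a}" for a y
      unfolding qf by (intro closed_Collect_le continuous_intros)
    ultimately show ?thesis by (simp add: closed_Int closed_INT)
  qed
  have Fent: "0 \<le> Q$1$1 \<and> Q$1$1 \<le> 1 \<and> 0 \<le> Q$2$2 \<and> Q$2$2 \<le> 1 \<and> \<bar>Q$1$2\<bar> \<le> 1 \<and> Q$2$1 = Q$1$2"
    if "Q \<in> F" for Q
  proof -
    note Fq = that[unfolded F_def mem_Collect_eq]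
    note sym = Fq[THEN conjunct1] and p = Fq[THEN conjunct2, THEN conjunct1]
      and u0 = Fq[THEN conjunct2, THEN conjunct2]
    have m1: "mat 1 \<in> K" unfolding K_def by simp
    have u: "\<forall>x. x \<bullet> (Q *v x) \<le> x \<bullet> x"
    proof
      fix x :: "real^2"
      have "(mat 1 *v x) \<bullet> (Q *v (mat 1 *v x)) \<le> x \<bullet> x" using u0 m1 by blast
      then show "x \<bullet> (Q *v x) \<le> x \<bullet> x" by simp
    qed
    have s: "Q$2$1 = Q$1$2" using arg_cong[OF sym, of "\<lambda>M. M$1$2"] by (simp add: tr)
    have p1: "0 \<le> Q$1$1" using p[rule_format, of "vector [1,0]"] by (simp add: qf)
    have p2: "0 \<le> Q$2$2" using p[rule_format, of "vector [0,1]"] by (simp add: qf)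
    have p3: "0 \<le> Q$1$1 + 2*Q$1$2 + Q$2$2" using p[rule_format, of "vector [1,1]"] s by (simp add: qf)
    have p4: "0 \<le> Q$1$1 - 2*Q$1$2 + Q$2$2" using p[rule_format, of "vector [1,-1]"] s by (simp add: qf)
    have u1: "Q$1$1 \<le> 1" using u[rule_format, of "vector [1,0]"] by (simp add: qf dot2)
    have u2: "Q$2$2 \<le> 1" using u[rule_format, of "vector [0,1]"] by (simp add: qf dot2)
    have u3: "Q$1$1 + 2*Q$1$2 + Q$2$2 \<le> 2" using u[rule_format, of "vector [1,1]"] s by (simp add: qf dot2)
    have u4: "Q$1$1 - 2*Q$1$2 + Q$2$2 \<le> 2" using u[rule_format, of "vector [1,-1]"] s by (simp add: qf dot2)
    show ?thesis using p1 p2 p3 p4 u1 u2 u3 u4 s by linarith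
  qed
  have boundedF: "bounded F"
  proof -
    have "norm Q \<le> 2" if "Q \<in> F" for Q
    proof -
      have e: "0 \<le> Q$1$1 \<and> Q$1$1 \<le> 1 \<and> 0 \<le> Q$2$2 \<and> Q$2$2 \<le> 1 \<and> \<bar>Q$1$2\<bar> \<le> 1 \<and> Q$2$1 = Q$1$2"
        using Fent[OF that] .
      have "(Q$1$1)^2 \<le> 1" "(Q$2$2)^2 \<le> 1" "(Q$1$2)^2 \<le> 1" "(Q$2$1)^2 \<le> 1"
        using e by (simp_all add: abs_square_le_1)
      then have "norm Q ^2 \<le> 2^2" unfolding n2 by simp
      then show ?thesis by (rule power2_le_imp_le) simp
    qed
    then show ?thesis unfolding bounded_iff by blast
  qed
  have compactF: "compact F" using closedF boundedF by (simp add: compact_eq_bounded_closed)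
  define \<epsilon> where "\<epsilon> = 1 / R"
  have \<epsilon>pos: "\<epsilon> > 0" unfolding \<epsilon>_def using Rpos by simp
  have qfe: "x \<bullet> ((\<epsilon> *\<^sub>R mat 1) *v x) = \<epsilon> * (x \<bullet> x)" for x :: "real^2"
    by (simp add: qf dot2 mat_def algebra_simps)
  have eF: "\<epsilon> *\<^sub>R mat 1 \<in> F"
  proof -
    have "transpose (\<epsilon> *\<^sub>R (mat 1::real^2^2)) = \<epsilon> *\<^sub>R mat 1" unfolding ent tr by (simp add: mat_def)
    moreover have "0 \<le> x \<bullet> ((\<epsilon> *\<^sub>R mat 1) *v x)" for x :: "real^2"
      unfolding qfe using \<epsilon>pos by simp
    moreover have "(s *v x) \<bullet> ((\<epsilon> *\<^sub>R mat 1) *v (s *v x)) \<le> x \<bullet> x" if "s \<in> K" for s x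
    proof -
      have "(s *v x) \<bullet> ((\<epsilon> *\<^sub>R mat 1) *v (s *v x)) = \<epsilon> * ((s *v x) \<bullet> (s *v x))" by (rule qfe)
      also have "\<dots> \<le> \<epsilon> * (norm s ^ 2 * (x \<bullet> x))" using cs \<epsilon>pos by (simp add: mult_left_mono)
      also have "\<dots> \<le> \<epsilon> * (R * (x \<bullet> x))" using Kb[OF that] \<epsilon>pos
        by (simp add: mult_left_mono mult_right_mono)
      also have "\<dots> = x \<bullet> x" unfolding \<epsilon>_def using Rpos by simp
      finally show ?thesis .
    qed
    ultimately show ?thesis unfolding F_def by blast
  qed
  have "continuous_on F det" unfolding det_2 by (intro continuous_intros)
  then obtain Q0 where Q0F: "Q0 \<in> F" and Q0max: "\<forall>Q\<in>F. det Q \<le> det Q0"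
    using continuous_attains_sup[OF compactF] eF by blast
  have dQ0: "det Q0 > 0"
  proof -
    have "det (\<epsilon> *\<^sub>R (mat 1::real^2^2)) = \<epsilon>^2" by (simp add: det_scale2)
    then show ?thesis using Q0max eF \<epsilon>pos by (metis less_le_trans zero_less_power)
  qed
  have pd: "Q$1$1 > 0" if "Q \<in> F" "det Q > 0" for Q
  proof -
    have e: "0 \<le> Q$1$1" "Q$2$1 = Q$1$2" using Fent[OF that(1)] by auto
    show ?thesis
    proof (rule ccontr)
      assume "\<not> Q$1$1 > 0"
      then have "Q$1$1 = 0" using e by simp
      then have "det Q + (Q$1$2)^2 = 0" unfolding det_2 using e by (simp add: power2_eq_square)
      then show False using that(2) zero_le_power2[of "Q$1$2"] by linarith
    qed
  qed
  have symF: "Q$2$1 = Q$1$2" if "Q \<in> F" for Q using Fent[OF that] by simp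
  have inv_Q: "transpose (nrm B) ** Q0 ** nrm B = Q0" if BA: "B \<in> A" for B
  proof -
    define g where "g = nrm B"
    have Bs: "B \<in> ?sg" using BA by (rule prod_semigroup.gen)
    define Q' where "Q' = transpose g ** Q0 ** g"
    note Fq = Q0F[unfolded F_def mem_Collect_eq]
    have sym0: "transpose Q0 = Q0" using Fq by blast
    have p0: "\<forall>x. 0 \<le> x \<bullet> (Q0 *v x)" using Fq by blast
    have u0: "\<forall>s\<in>K. \<forall>x. (s *v x) \<bullet> (Q0 *v (s *v x)) \<le> x \<bullet> x" using Fq by blast
    have Q'F: "Q' \<in> F"
    proof -
      have "transpose Q' = Q'" unfolding Q'_def using sym0
        by (simp add: matrix_transpose_mul matrix_mul_assoc)
      moreover have "\<forall>x. 0 \<le> x \<bullet> (Q' *v x)" unfolding Q'_def qf_conj using p0 by blast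
      moreover have "\<forall>s\<in>K. \<forall>x. (s *v x) \<bullet> (Q' *v (s *v x)) \<le> x \<bullet> x"
      proof (intro ballI allI)
        fix s x assume "s \<in> K"
        then have "g ** s \<in> K" using K_mult BA unfolding g_def by blast
        then have "((g ** s) *v x) \<bullet> (Q0 *v ((g ** s) *v x)) \<le> x \<bullet> x" using u0 by blast
        then show "(s *v x) \<bullet> (Q' *v (s *v x)) \<le> x \<bullet> x"
          unfolding Q'_def qf_conj by (simp add: matrix_vector_mul_assoc)
      qed
      ultimately show ?thesis unfolding F_def by blast
    qed
    have dQ': "det Q' = det Q0"
    proof -
      have "det Q' = (det g)^2 * det Q0" unfolding Q'_def
        by (simp add: det_mul det_transpose power2_eq_square)
      then show ?thesis using nrm_det[OF Bs] unfolding g_def by simp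
    qed
    define Q'' where "Q'' = (1/2) *\<^sub>R Q0 + (1/2) *\<^sub>R Q'"
    have Q''F: "Q'' \<in> F"
    proof -
      have s0: "Q0$2$1 = Q0$1$2" using symF[OF Q0F] .
      have s1: "Q'$2$1 = Q'$1$2" using symF[OF Q'F] .
      note Fq' = Q'F[unfolded F_def mem_Collect_eq]
      have p1: "\<forall>x. 0 \<le> x \<bullet> (Q' *v x)" using Fq' by blast
      have u1: "\<forall>s\<in>K. \<forall>x. (s *v x) \<bullet> (Q' *v (s *v x)) \<le> x \<bullet> x" using Fq' by blast
      have "transpose Q'' = Q''" unfolding ent tr Q''_def using s0 s1 by simp
      moreover have "\<forall>x. 0 \<le> x \<bullet> (Q'' *v x)" unfolding Q''_def qf_lin using p0 p1
        by (simp add: add_nonneg_nonneg)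
      moreover have "\<forall>s\<in>K. \<forall>x. (s *v x) \<bullet> (Q'' *v (s *v x)) \<le> x \<bullet> x"
      proof (intro ballI allI)
        fix s x assume sK: "s \<in> K"
        have "(s *v x) \<bullet> (Q0 *v (s *v x)) \<le> x \<bullet> x" "(s *v x) \<bullet> (Q' *v (s *v x)) \<le> x \<bullet> x"
          using u0 u1 sK by blast+
        then show "(s *v x) \<bullet> (Q'' *v (s *v x)) \<le> x \<bullet> x" unfolding Q''_def qf_lin by simp
      qed
      ultimately show ?thesis unfolding F_def by blast
    qed
    have le: "det Q'' \<le> det Q0" using Q0max Q''F by blast
    have s0: "Q0$2$1 = Q0$1$2" using symF[OF Q0F] .
    have s1: "Q'$2$1 = Q'$1$2" using symF[OF Q'F] .
    have a0: "Q0$1$1 > 0" using pd[OF Q0F dQ0] .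
    have a1: "Q'$1$1 > 0" using pd[OF Q'F] dQ0 dQ' by simp
    have m0: "Q0$1$1 * Q0$2$2 - (Q0$1$2)^2 = det Q0" unfolding det_2 using s0 by (simp add: power2_eq_square)
    have "Q'$1$1 * Q'$2$2 - (Q'$1$2)^2 = det Q'" unfolding det_2 using s1
      by (simp add: power2_eq_square)
    then have m1: "Q'$1$1 * Q'$2$2 - (Q'$1$2)^2 = det Q0" using dQ' by simp
    have "det Q'' = ((Q0$1$1 + Q'$1$1) * (Q0$2$2 + Q'$2$2) - (Q0$1$2 + Q'$1$2)^2) / 4"
      unfolding Q''_def det_2 using s0 s1 by (simp add: power2_eq_square field_simps)
    then have "((Q0$1$1 + Q'$1$1) * (Q0$2$2 + Q'$2$2) - (Q0$1$2 + Q'$1$2)^2) / 4 \<le> det Q0"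
      using le by simp
    then have "Q0$1$1 = Q'$1$1 \<and> Q0$1$2 = Q'$1$2 \<and> Q0$2$2 = Q'$2$2"
      using det_uniq[OF a0 a1 dQ0 m0 m1] by blast
    then have "Q' = Q0" unfolding ent using s0 s1 by simp
    then show ?thesis unfolding Q'_def g_def .
  qed
  define a where "a = Q0$1$1"
  define b where "b = Q0$1$2"
  define c where "c = Q0$2$2"
  define m where "m = det Q0"
  have s0: "Q0$2$1 = b" using symF[OF Q0F] unfolding b_def .
  have apos: "a > 0" using pd[OF Q0F dQ0] unfolding a_def .
  have mpos: "m > 0" using dQ0 unfolding m_def .
  have mabc: "m = a*c - b*b" unfolding m_def a_def b_def c_def det_2 using s0 b_def by simp
  define M :: "real^2^2" where "M = vector [vector [sqrt a, b / sqrt a], vector [0, sqrt (m / a)]]"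
  have sa: "sqrt a * sqrt a = a" using apos by simp
  have sma: "sqrt (m/a) * sqrt (m/a) = m / a" using apos mpos by simp
  have sa0: "sqrt a \<noteq> 0" using apos by simp
  have MtM: "transpose M ** M = Q0"
  proof -
    have c_eq: "b / sqrt a * (b / sqrt a) + m / a = c"
      using sa sa0 apos mabc by (simp add: field_simps)
    show ?thesis unfolding ent mm tr M_def
      using sa sma sa0 s0 c_eq by (simp add: a_def b_def c_def)
  qed
  have Minv: "invertible M"
  proof -
    have "det M = sqrt a * sqrt (m/a)" unfolding M_def det_2 by simp
    moreover have "sqrt (m/a) > 0" using apos mpos by simp
    ultimately show ?thesis unfolding invertible_det_nz using apos mpos by simp
  qed
  show ?thesis unfolding strongly_conformal_def
  proof (intro exI[of _ M] conjI ballI)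
    show "invertible M" by (rule Minv)
    fix B assume BA: "B \<in> A"
    define N where "N = matrix_inv M"
    have MN: "M ** N = mat 1" "N ** M = mat 1" using inv_M[OF Minv] unfolding N_def by auto
    define U where "U = (1 / sqrt \<bar>det B\<bar>) *\<^sub>R (M ** B ** matrix_inv M)"
    have U: "U = M ** nrm B ** N" unfolding U_def nrm_def N_def
      by (simp add: matrix_scalar_ac scalar_matrix_assoc)
    have "transpose U ** U = transpose N ** (transpose (nrm B) ** (transpose M ** M) ** nrm B) ** N"
      unfolding U by (simp add: matrix_transpose_mul matrix_mul_assoc)
    also have "\<dots> = transpose N ** (transpose M ** M) ** N" using inv_Q[OF BA] MtM by simp
    also have "\<dots> = transpose (M ** N) ** (M ** N)" by (simp add: matrix_transpose_mul matrix_mul_assoc)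
    also have "\<dots> = mat 1" using MN by (simp add: transpose_mat)
    finally have tU: "transpose U ** U = mat 1" .
    then have "U ** transpose U = mat 1" using matrix_left_right_inverse by blast
    then have "orthogonal_matrix U" using tU unfolding orthogonal_matrix_def by blast
    then show "orthogonal_matrix ((1 / sqrt \<bar>det B\<bar>) *\<^sub>R (M ** B ** matrix_inv M))" unfolding U_def .
  qed
qed

theorem lemma3p1:
  fixes A :: "(real^2^2) set"
  assumes "\<forall>B\<in>A. invertible B"
  shows "scrR A = {} \<longleftrightarrow> strongly_conformal A"
  using dir1[OF assms] dir2[OF assms] by blast

end
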